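(* For any lasso automaton $X=(X_1,X_2,\delta_1,\delta_2,\delta_3)$, the largest set of equations $\mathsf{Eq}(X)=(E_1,E_2)$ satisfied by $X$ is a congruence on $(\Sigma^\ast,\Sigma^{\ast+})$, in the sense that $E_1$ is compatible with concatenation on $\Sigma^\ast$ (i.e. is a monoid congruence) and the pair respects the operation $\times:\Sigma^\ast\times\Sigma^{\ast+}\to\Sigma^{\ast+}$, $w\times(u,v)=(wu,v)$: if $(w,w')\in E_1$ and $((u,v),(u',v'))\in E_2$ then $((wu,v),(w'u',v'))\in E_2$.
   Context: $\Sigma$ is a finite alphabet, $\Sigma^{\ast+}=\Sigma^\ast\times\Sigma^+$ the lassos. A lasso automaton is $(X_1,X_2,\delta_1,\delta_2,\delta_3)$ with disjoint $X_1,X_2$, $\delta_1:X_1\times\Sigma\to X_1$, $\delta_2:X_1\times\Sigma\to X_2$, $\delta_3:X_2\times\Sigma\to X_2$; extend $\delta_1,\delta_3$ to words, set $\delta_\circ(x,av)=\delta_3(\delta_2(x,a),v)$ for $x\in X_1$ and $\delta(x,(u,v))=\delta_\circ(\delta_1(x,u),v)$. The initial lasso automaton has carrier $(\Sigma^\ast,\Sigma^{\ast+})$ with transitions $\sigma_1(u,a)=ua$, $\sigma_2(u,a)=(u,a)$, $\sigma_3((u,v),a)=(u,va)$. A set of equations is a bisimulation equivalence $E=(E_1,E_2)$ on this automaton: equivalence relations $E_1$ on $\Sigma^\ast$ and $E_2$ on $\Sigma^{\ast+}$ with $(u,u')\in E_1\Rightarrow(ua,u'a)\in E_1$ and $((u,a),(u',a))\in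 E_2$, and $((u,v),(u',v'))\in E_2\Rightarrow((u,va),(u',v'a))\in E_2$, for all $a\in\Sigma$. $X$ satisfies $E$ if for all $x\in X_1$: $\delta_1(x,u)=\delta_1(x,v)$ for all $(u,v)\in E_1$ and $\delta(x,(u,v))=\delta(x,(u',v'))$ for all $((u,v),(u',v'))\in E_2$. $\mathsf{Eq}(X)$ denotes the largest set of equations satisfied by $X$. *)

theory Defs
  imports Main
begin

text \<open>A lasso automaton has carriers X1 :: 's set and X2 :: 't set (disjointness is
automatic since they live in different types) and transition functions closed on them.\<close>

definition lassos :: "('a list \<times> 'a list) set" where
  "lassos = {(u, v). v \<noteq> []}"

definition lasso_automaton ::
  "'s set \<Rightarrow> 't set \<Rightarrow> ('s \<Rightarrow> 'a \<Rightarrow> 's) \<Rightarrow> ('s \<Rightarrow> 'a \<Rightarrow> 't) \<Rightarrow> ('t \<Rightarrow> 'a \<Rightarrow> 't) \<Rightarrow> bool" where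
  "lasso_automaton X1 X2 d1 d2 d3 \<longleftrightarrow>
     (\<forall>x\<in>X1. \<forall>a. d1 x a \<in> X1 \<and> d2 x a \<in> X2) \<and> (\<forall>y\<in>X2. \<forall>a. d3 y a \<in> X2)"

definition ext1 :: "('s \<Rightarrow> 'a \<Rightarrow> 's) \<Rightarrow> 's \<Rightarrow> 'a list \<Rightarrow> 's" where
  "ext1 d1 x u = foldl d1 x u"

definition ext3 :: "('t \<Rightarrow> 'a \<Rightarrow> 't) \<Rightarrow> 't \<Rightarrow> 'a list \<Rightarrow> 't" where
  "ext3 d3 y v = foldl d3 y v"

fun delta_circ :: "('s \<Rightarrow> 'a \<Rightarrow> 't) \<Rightarrow> ('t \<Rightarrow> 'a \<Rightarrow> 't) \<Rightarrow> 's \<Rightarrow> 'a list \<Rightarrow> 't" where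
  "delta_circ d2 d3 x (a # v) = ext3 d3 (d2 x a) v"
| "delta_circ d2 d3 x [] = undefined"

definition delta ::
  "('s \<Rightarrow> 'a \<Rightarrow> 's) \<Rightarrow> ('s \<Rightarrow> 'a \<Rightarrow> 't) \<Rightarrow> ('t \<Rightarrow> 'a \<Rightarrow> 't) \<Rightarrow> 's \<Rightarrow> 'a list \<times> 'a list \<Rightarrow> 't" where
  "delta d1 d2 d3 x uv = delta_circ d2 d3 (ext1 d1 x (fst uv)) (snd uv)"

text \<open>A set of equations: a bisimulation equivalence on the initial lasso automaton.\<close>
definition is_equations ::
  "('a list \<times> 'a list) set \<times> (('a list \<times> 'a list) \<times> ('a list \<times> 'a list)) set \<Rightarrow> bool" where
  "is_equations E \<longleftrightarrow>
     equiv UNIV (fst E) \<and> equiv lassos (snd E) \<and>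
     (\<forall>u u' a. (u, u') \<in> fst E \<longrightarrow> (u @ [a], u' @ [a]) \<in> fst E \<and> ((u, [a]), (u', [a])) \<in> snd E) \<and>
     (\<forall>u v u' v' a. ((u, v), (u', v')) \<in> snd E \<longrightarrow> ((u, v @ [a]), (u', v' @ [a])) \<in> snd E)"

definition satisfies ::
  "'s set \<Rightarrow> ('s \<Rightarrow> 'a \<Rightarrow> 's) \<Rightarrow> ('s \<Rightarrow> 'a \<Rightarrow> 't) \<Rightarrow> ('t \<Rightarrow> 'a \<Rightarrow> 't) \<Rightarrow>
   ('a list \<times> 'a list) set \<times> (('a list \<times> 'a list) \<times> ('a list \<times> 'a list)) set \<Rightarrow> bool" where
  "satisfies X1 d1 d2 d3 E \<longleftrightarrow>
     (\<forall>x\<in>X1. (\<forall>(u, v)\<in>fst E. ext1 d1 x u = ext1 d1 x v) \<and>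
             (\<forall>(p, q)\<in>snd E. delta d1 d2 d3 x p = delta d1 d2 d3 x q))"

definition Eq ::
  "'s set \<Rightarrow> ('s \<Rightarrow> 'a \<Rightarrow> 's) \<Rightarrow> ('s \<Rightarrow> 'a \<Rightarrow> 't) \<Rightarrow> ('t \<Rightarrow> 'a \<Rightarrow> 't) \<Rightarrow>
   ('a list \<times> 'a list) set \<times> (('a list \<times> 'a list) \<times> ('a list \<times> 'a list)) set" where
  "Eq X1 d1 d2 d3 = (THE E. is_equations E \<and> satisfies X1 d1 d2 d3 E \<and>
      (\<forall>E'. is_equations E' \<and> satisfies X1 d1 d2 d3 E' \<longrightarrow> fst E' \<subseteq> fst E \<and> snd E' \<subseteq> snd E))"

end

theory Submission
  imports Defs
begin

definition EE1 :: "'s set \<Rightarrow> ('s \<Rightarrow> 'a \<Rightarrow> 's) \<Rightarrow> ('a list \<times> 'a list) set" where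
  "EE1 X1 d1 = {(u, v). \<forall>x\<in>X1. ext1 d1 x u = ext1 d1 x v}"

definition EE2 where
  "EE2 X1 d1 d2 d3 = {(p, q). p \<in> lassos \<and> q \<in> lassos \<and> (\<forall>x\<in>X1. delta d1 d2 d3 x p = delta d1 d2 d3 x q)}"

lemma ext1_snoc: "ext1 d1 x (u @ [a]) = d1 (ext1 d1 x u) a"
  by (simp add: ext1_def)

lemma ext1_app: "ext1 d1 x (u @ w) = ext1 d1 (ext1 d1 x u) w"
  by (simp add: ext1_def)

lemma delta_snoc: "v \<noteq> [] \<Longrightarrow> delta d1 d2 d3 x (u, v @ [a]) = d3 (delta d1 d2 d3 x (u, v)) a"
  by (cases v) (auto simp: delta_def ext3_def)

lemma delta_single: "delta d1 d2 d3 x (u, [a]) = d2 (ext1 d1 x u) a"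
  by (simp add: delta_def ext3_def)

lemma delta_app: "delta d1 d2 d3 x (w @ u, v) = delta d1 d2 d3 (ext1 d1 x w) (u, v)"
  by (simp add: delta_def ext1_app)

lemma EE_is: "is_equations (EE1 X1 d1, EE2 X1 d1 d2 d3)"
  unfolding is_equations_def
proof (intro conjI allI impI)
  show "equiv UNIV (fst (EE1 X1 d1, EE2 X1 d1 d2 d3))"
    by (auto simp: equiv_def refl_on_def sym_def trans_def EE1_def)
  show "equiv lassos (snd (EE1 X1 d1, EE2 X1 d1 d2 d3))"
    by (auto simp: equiv_def refl_on_def sym_def trans_def EE2_def)
next
  fix u u' a assume "(u, u') \<in> fst (EE1 X1 d1, EE2 X1 d1 d2 d3)"
  then show "(u @ [a], u' @ [a]) \<in> fst (EE1 X1 d1, EE2 X1 d1 d2 d3)"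
    "((u, [a]), u', [a]) \<in> snd (EE1 X1 d1, EE2 X1 d1 d2 d3)"
    by (auto simp: EE1_def EE2_def ext1_snoc delta_single lassos_def)
next
  fix u v u' v' a assume "((u, v), u', v') \<in> snd (EE1 X1 d1, EE2 X1 d1 d2 d3)"
  then show "((u, v @ [a]), u', v' @ [a]) \<in> snd (EE1 X1 d1, EE2 X1 d1 d2 d3)"
    by (auto simp: EE2_def delta_snoc lassos_def)
qed

lemma EE_sat: "satisfies X1 d1 d2 d3 (EE1 X1 d1, EE2 X1 d1 d2 d3)"
  by (auto simp: satisfies_def EE1_def EE2_def)

lemma EE_max: "is_equations E' \<Longrightarrow> satisfies X1 d1 d2 d3 E' \<Longrightarrow>
   fst E' \<subseteq> EE1 X1 d1 \<and> snd E' \<subseteq> EE2 X1 d1 d2 d3"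
  unfolding is_equations_def satisfies_def EE1_def EE2_def equiv_def refl_on_def
  by fast

lemma Eq_eq: "Eq X1 d1 d2 d3 = (EE1 X1 d1, EE2 X1 d1 d2 d3)"
  unfolding Eq_def
proof (rule the_equality)
  show "is_equations (EE1 X1 d1, EE2 X1 d1 d2 d3) \<and> satisfies X1 d1 d2 d3 (EE1 X1 d1, EE2 X1 d1 d2 d3) \<and>
    (\<forall>E'. is_equations E' \<and> satisfies X1 d1 d2 d3 E' \<longrightarrow> fst E' \<subseteq> fst (EE1 X1 d1, EE2 X1 d1 d2 d3) \<and> snd E' \<subseteq> snd (EE1 X1 d1, EE2 X1 d1 d2 d3))"
    using EE_is EE_sat EE_max by fastforce
next
  fix E assume h: "is_equations E \<and> satisfies X1 d1 d2 d3 E \<and>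
     (\<forall>E'. is_equations E' \<and> satisfies X1 d1 d2 d3 E' \<longrightarrow> fst E' \<subseteq> fst E \<and> snd E' \<subseteq> snd E)"
  then have "fst (EE1 X1 d1, EE2 X1 d1 d2 d3) \<subseteq> fst E \<and> snd (EE1 X1 d1, EE2 X1 d1 d2 d3) \<subseteq> snd E"
    using EE_is EE_sat by blast
  moreover have "fst E \<subseteq> EE1 X1 d1 \<and> snd E \<subseteq> EE2 X1 d1 d2 d3" using h EE_max by blast
  ultimately show "E = (EE1 X1 d1, EE2 X1 d1 d2 d3)"
    by (metis fst_conv snd_conv prod.collapse subset_antisym)
qed

lemma ext1_closed: "lasso_automaton X1 X2 d1 d2 d3 \<Longrightarrow> x \<in> X1 \<Longrightarrow> ext1 d1 x w \<in> X1"
  unfolding ext1_def lasso_automaton_def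
  by (induction w arbitrary: x) auto

theorem mainTheorem11:
  fixes X1 :: "'s set" and X2 :: "'t set"
    and d1 :: "'s \<Rightarrow> 'a::finite \<Rightarrow> 's" and d2 :: "'s \<Rightarrow> 'a \<Rightarrow> 't" and d3 :: "'t \<Rightarrow> 'a \<Rightarrow> 't"
  assumes "lasso_automaton X1 X2 d1 d2 d3"
    and "Eq X1 d1 d2 d3 = (E1, E2)"
  shows "equiv UNIV E1
    \<and> (\<forall>w w' u u'. (w, w') \<in> E1 \<and> (u, u') \<in> E1 \<longrightarrow> (w @ u, w' @ u') \<in> E1)
    \<and> (\<forall>w w' u v u' v'. (w, w') \<in> E1 \<and> ((u, v), (u', v')) \<in> E2
          \<longrightarrow> ((w @ u, v), (w' @ u', v')) \<in> E2)"
proof -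
  have e1: "E1 = EE1 X1 d1" and e2: "E2 = EE2 X1 d1 d2 d3" using assms(2) Eq_eq[of X1 d1 d2 d3] by auto
  have cl: "\<And>x w. x \<in> X1 \<Longrightarrow> ext1 d1 x w \<in> X1" using ext1_closed[OF assms(1)] .
  have A: "equiv UNIV E1" using EE_is[of X1 d1 d2 d3] e1 by (simp add: is_equations_def)
  have B: "(w @ u, w' @ u') \<in> E1" if "(w, w') \<in> E1" "(u, u') \<in> E1" for w w' u u'
  proof -
    { fix x assume x: "x \<in> X1"
      have "ext1 d1 x (w @ u) = ext1 d1 (ext1 d1 x w') u" using that x by (simp add: e1 EE1_def ext1_app)
      also have "\<dots> = ext1 d1 x (w' @ u')" using that cl[OF x, of w'] by (simp add: e1 EE1_def ext1_app)
      finally have "ext1 d1 x (w @ u) = ext1 d1 x (w' @ u')" . }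
    then show ?thesis by (simp add: e1 EE1_def)
  qed
  have C: "((w @ u, v), (w' @ u', v')) \<in> E2" if "(w, w') \<in> E1" "((u, v), (u', v')) \<in> E2" for w w' u v u' v'
  proof -
    { fix x assume x: "x \<in> X1"
      have "delta d1 d2 d3 x (w @ u, v) = delta d1 d2 d3 (ext1 d1 x w') (u, v)" using that x by (simp add: e1 EE1_def delta_app)
      also have "\<dots> = delta d1 d2 d3 x (w' @ u', v')" using that cl[OF x, of w'] by (simp add: e2 EE2_def delta_app)
      finally have "delta d1 d2 d3 x (w @ u, v) = delta d1 d2 d3 x (w' @ u', v')" . }
    moreover have "(w @ u, v) \<in> lassos" "(w' @ u', v') \<in> lassos" using that(2) by (auto simp: e2 EE2_def lassos_def)
    ultimately show ?thesis by (simp add: e2 EE2_def)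
  qed
  show ?thesis using A B C by blast
qed

end
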